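(* Under the assumptions below, and assuming $\mu$ is sufficiently large, the data $(X_i,U_i)$ are informative for the stabilizability of $A_C$ if and only if, for every $i\in\{1,\dots,N\}$, there exists a right inverse $X_i^{+}$ of $X_i$ (i.e. $X_iX_i^{+}=I$) such that $(X_i\mathcal{D}_{11}-E_iV)X_i^{+}$ is stable (Hurwitz).
   Context: Leader–follower multi-agent system with $N$ followers. Follower $i$: $\dot x_i=A_ix_i+B_iu_i+E_iv$, $e_i=C_ix_i+D_iu_i+F_iv$, with $x_i\in\mathbb{R}^{n_i}$, $u_i\in\mathbb{R}^{m_i}$, $e_i\in\mathbb{R}^{p}$; exosystem $\dot v=Sv$, $v\in\mathbb{R}^q$. The matrices $A_i,B_i,C_i,D_i$ are unknown; $E_i,F_i,S$ are known. Distributed controller: $u_i=K_{1i}x_i+K_{2i}\eta_i$, $\dot\eta_i=S\eta_i+\mu[\sum_j a_{ij}(\eta_j-\eta_i)+a_{i0}(v-\eta_i)]$. The Laplacian of the graph (leader node 0 plus followers) is $\mathcal{L}=\begin{bmatrix}0&0\\-[a_{10},\dots,a_{N0}]^T&H\end{bmatrix}$. The closed-loop matrix is $A_C=\begin{bmatrix}A+BK_1&BK_2\\0&(I_N\otimes S)-\mu(H\otimes I_q)\end{bmatrix}$ with $A=\mathrm{blockdiag}(A_i)$, $B=\mathrm{blockdiag}(B_i)$, $K_1=\mathrm{blockdiag}(K_{1i})$, $K_2=\mathrm{blockdiag}(K_{2i})$. Data: the signals on a time interval are expanded in an orthogonal polynomial basis (e.g. Chebyshev) truncated at degree $N$; $X_i\in\mathbb{R}^{n_i\times(N+1)}$,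 $U_i$, $V$ collect the first $N+1$ coefficient vectors of $x_i,u_i,v$, and $\mathcal{D}_{11}\in\mathbb{R}^{(N+1)\times(N+1)}$ is the leading block of the basis differentiation matrix. Exact data: $X_i\mathcal{D}_{11}=A_iX_i+B_iU_i+E_iV$. The data are informative for the stabilizability of $A_C$ if every $(A,B)$ consistent with the data (i.e. $X\mathcal{D}_{11}=AX+BU+E\bar V$ with stacked data, $\bar V=1_N\otimes V$) admits $K_1,K_2,\mu$ making $A_C$ Hurwitz. Assumptions: $S$ has no eigenvalues with negative real part; the directed weighted graph is unknown but contains a directed spanning tree rooted at the leader; there exist $\varepsilon_1,\varepsilon_2>0$ with $\varepsilon_1\le|\mathcal{L}_{ij}|\le\varepsilon_2$ for all nonzero entries of $\mathcal{L}$. *)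

theory Defs
  imports "Jordan_Normal_Form.Matrix" "Jordan_Normal_Form.Char_Poly"
begin

definition hurwitz :: "real mat \<Rightarrow> bool" where
  "hurwitz M \<longleftrightarrow> dim_row M = dim_col M \<and>
     (\<forall>z. eigenvalue (map_mat complex_of_real M) z \<longrightarrow> Re z < 0)"

definition kron :: "'a::times mat \<Rightarrow> 'a mat \<Rightarrow> 'a mat" where
  "kron P Q = mat (dim_row P * dim_row Q) (dim_col P * dim_col Q)
     (\<lambda>(i,j). P $$ (i div dim_row Q, j div dim_col Q) * Q $$ (i mod dim_row Q, j mod dim_col Q))"

definition bdiag :: "(nat \<Rightarrow> 'a::zero mat) \<Rightarrow> nat \<Rightarrow> 'a mat" where
  "bdiag F N = diag_block_mat (map F [1..<Suc N])"

text \<open>Graph on nodes 0 (leader), 1..N (followers); a i j is the weight of the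
  edge from j to i (i receives information from j).  Laplacian of the graph.\<close>
definition laplacian :: "nat \<Rightarrow> (nat \<Rightarrow> nat \<Rightarrow> real) \<Rightarrow> real mat" where
  "laplacian N a = mat (Suc N) (Suc N)
     (\<lambda>(i,j). if i = j then (\<Sum>k\<in>{0..N} - {i}. a i k) else - a i j)"

definition H_of :: "nat \<Rightarrow> (nat \<Rightarrow> nat \<Rightarrow> real) \<Rightarrow> real mat" where
  "H_of N a = mat N N (\<lambda>(i,j). laplacian N a $$ (Suc i, Suc j))"

definition admissible_graph :: "nat \<Rightarrow> (nat \<Rightarrow> nat \<Rightarrow> real) \<Rightarrow> real \<Rightarrow> real \<Rightarrow> bool" where
  "admissible_graph N a \<epsilon>1 \<epsilon>2 \<longleftrightarrow>
     (\<forall>i\<le>N. \<forall>j\<le>N. 0 \<le> a i j) \<and> (\<forall>i\<le>N. a i i = 0) \<and> (\<forall>j\<le>N. a 0 j = 0) \<and>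
     (\<forall>i\<in>{1..N}. (0, i) \<in> {(j, k). j \<le> N \<and> k \<le> N \<and> 0 < a k j}\<^sup>*) \<and>
     (\<forall>i\<le>N. \<forall>j\<le>N. laplacian N a $$ (i,j) \<noteq> 0 \<longrightarrow>
        \<epsilon>1 \<le> \<bar>laplacian N a $$ (i,j)\<bar> \<and> \<bar>laplacian N a $$ (i,j)\<bar> \<le> \<epsilon>2)"

definition closed_loop :: "real mat \<Rightarrow> real mat \<Rightarrow> real mat \<Rightarrow> real mat \<Rightarrow> real mat \<Rightarrow> real mat \<Rightarrow> real \<Rightarrow> real mat" where
  "closed_loop A B K1 K2 S H \<mu> =
     (let Lo = kron (1\<^sub>m (dim_row H)) S - \<mu> \<cdot>\<^sub>m kron H (1\<^sub>m (dim_row S))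
      in four_block_mat (A + B * K1) (B * K2) (0\<^sub>m (dim_row Lo) (dim_col A)) Lo)"

definition consistent ::
  "nat \<Rightarrow> (nat \<Rightarrow> nat) \<Rightarrow> (nat \<Rightarrow> nat) \<Rightarrow> (nat \<Rightarrow> real mat) \<Rightarrow> (nat \<Rightarrow> real mat) \<Rightarrow>
   (nat \<Rightarrow> real mat) \<Rightarrow> real mat \<Rightarrow> real mat \<Rightarrow> (nat \<Rightarrow> real mat) \<Rightarrow> (nat \<Rightarrow> real mat) \<Rightarrow> bool" where
  "consistent N n m E X U V D Ai Bi \<longleftrightarrow>
     (\<forall>i\<in>{1..N}. Ai i \<in> carrier_mat (n i) (n i) \<and> Bi i \<in> carrier_mat (n i) (m i) \<and>
        X i * D = Ai i * X i + Bi i * U i + E i * V)"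

definition informative ::
  "nat \<Rightarrow> (nat \<Rightarrow> nat) \<Rightarrow> (nat \<Rightarrow> nat) \<Rightarrow> nat \<Rightarrow> (nat \<Rightarrow> real mat) \<Rightarrow> (nat \<Rightarrow> real mat) \<Rightarrow>
   (nat \<Rightarrow> real mat) \<Rightarrow> real mat \<Rightarrow> real mat \<Rightarrow> real mat \<Rightarrow> real mat \<Rightarrow> real \<Rightarrow> bool" where
  "informative N n m q E X U V D S H \<mu> \<longleftrightarrow>
     (\<exists>K1 K2. (\<forall>i\<in>{1..N}. K1 i \<in> carrier_mat (m i) (n i) \<and> K2 i \<in> carrier_mat (m i) q) \<and>
        (\<forall>Ai Bi. consistent N n m E X U V D Ai Bi \<longrightarrow>
           hurwitz (closed_loop (bdiag Ai N) (bdiag Bi N) (bdiag K1 N) (bdiag K2 N) S H \<mu>)))"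

end

theory Submission
  imports Defs
begin


lemma smult_append_vec: "a \<cdot>\<^sub>v (v @\<^sub>v w) = (a \<cdot>\<^sub>v v) @\<^sub>v (a \<cdot>\<^sub>v w)"
  by (rule eq_vecI, auto)

lemma eig_four_block_D:
  fixes A :: "'a::comm_ring_1 mat"
  assumes A: "A \<in> carrier_mat n1 n1" and B: "B \<in> carrier_mat n1 n2" and D: "D \<in> carrier_mat n2 n2"
    and ev: "eigenvalue (four_block_mat A B (0\<^sub>m n2 n1) D) z"
  shows "eigenvalue A z \<or> eigenvalue D z"
proof -
  let ?M = "four_block_mat A B (0\<^sub>m n2 n1) D"
  from ev obtain v where v: "v \<in> carrier_vec (n1+n2)" "v \<noteq> 0\<^sub>v (n1+n2)" "?M *\<^sub>v v = z \<cdot>\<^sub>v v"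
    unfolding eigenvalue_def eigenvector_def using A D by auto
  define v1 where "v1 = vec_first v n1"
  define v2 where "v2 = vec_last v n2"
  have vv: "v = v1 @\<^sub>v v2" using v(1) unfolding v1_def v2_def by simp
  have c1: "v1 \<in> carrier_vec n1" "v2 \<in> carrier_vec n2" unfolding v1_def v2_def by auto
  have "?M *\<^sub>v v = (A *\<^sub>v v1 + B *\<^sub>v v2) @\<^sub>v (0\<^sub>m n2 n1 *\<^sub>v v1 + D *\<^sub>v v2)"
    unfolding vv by (rule four_block_mat_mult_vec[OF A B _ D c1], auto)
  also have "0\<^sub>m n2 n1 *\<^sub>v v1 + D *\<^sub>v v2 = D *\<^sub>v v2" using c1 D by auto
  finally have eq: "(A *\<^sub>v v1 + B *\<^sub>v v2) @\<^sub>v (D *\<^sub>v v2) = (z \<cdot>\<^sub>v v1) @\<^sub>v (z \<cdot>\<^sub>v v2)"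
    using v(3) unfolding vv smult_append_vec by simp
  have e1: "A *\<^sub>v v1 + B *\<^sub>v v2 = z \<cdot>\<^sub>v v1" and e2: "D *\<^sub>v v2 = z \<cdot>\<^sub>v v2"
    using append_vec_eq[of "A *\<^sub>v v1 + B *\<^sub>v v2" n1 "z \<cdot>\<^sub>v v1"] eq A B c1 by auto
  show ?thesis
  proof (cases "v2 = 0\<^sub>v n2")
    case True
    with vv v(2) have "v1 \<noteq> 0\<^sub>v n1" by auto
    moreover have "B *\<^sub>v v2 = 0\<^sub>v n1" using B True by (intro eq_vecI, auto simp: scalar_prod_def)
    then have "A *\<^sub>v v1 = z \<cdot>\<^sub>v v1" using e1 A c1 by auto
    ultimately have "eigenvector A v1 z" unfolding eigenvector_def using A c1 by auto
    then show ?thesis unfolding eigenvalue_def by auto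
  next
    case False
    then have "eigenvector D v2 z" unfolding eigenvector_def using D c1 e2 by auto
    then show ?thesis unfolding eigenvalue_def by auto
  qed
qed

lemma eig_four_block_A:
  fixes A :: "'a::comm_ring_1 mat"
  assumes A: "A \<in> carrier_mat n1 n1" and B: "B \<in> carrier_mat n1 n2" and D: "D \<in> carrier_mat n2 n2"
    and ev: "eigenvalue A z"
  shows "eigenvalue (four_block_mat A B (0\<^sub>m n2 n1) D) z"
proof -
  from ev obtain v where v: "v \<in> carrier_vec n1" "v \<noteq> 0\<^sub>v n1" "A *\<^sub>v v = z \<cdot>\<^sub>v v"
    unfolding eigenvalue_def eigenvector_def using A by auto
  let ?w = "v @\<^sub>v 0\<^sub>v n2"
  have "four_block_mat A B (0\<^sub>m n2 n1) D *\<^sub>v ?w = z \<cdot>\<^sub>v ?w"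
  proof (rule eq_vecI)
    fix i assume i: "i < dim_vec (z \<cdot>\<^sub>v ?w)"
    show "(four_block_mat A B (0\<^sub>m n2 n1) D *\<^sub>v ?w) $ i = (z \<cdot>\<^sub>v ?w) $ i"
    proof (cases "i < n1")
      case True
      have "(four_block_mat A B (0\<^sub>m n2 n1) D *\<^sub>v ?w) $ i = row (four_block_mat A B (0\<^sub>m n2 n1) D) i \<bullet> ?w"
        using i v A D by auto
      also have "\<dots> = (\<Sum>j<n1+n2. four_block_mat A B (0\<^sub>m n2 n1) D $$ (i,j) * ?w $ j)"
        unfolding scalar_prod_def using v A D True by (auto intro!: sum.cong simp: atLeast0LessThan)
      also have "\<dots> = (\<Sum>j<n1. A $$ (i,j) * v $ j)"
      proof -
        have "(\<Sum>j<n1+n2. four_block_mat A B (0\<^sub>m n2 n1) D $$ (i,j) * ?w $ j) = (\<Sum>j<n1. four_block_mat A B (0\<^sub>m n2 n1) D $$ (i,j) * ?w $ j)"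
          by (rule sum.mono_neutral_right, insert v A D True, auto)
        also have "\<dots> = (\<Sum>j<n1. A $$ (i,j) * v $ j)"
          by (rule sum.cong, insert v A D True, auto)
        finally show ?thesis .
      qed
      also have "\<dots> = (A *\<^sub>v v) $ i" using True A v(1)
        by (auto simp: scalar_prod_def atLeast0LessThan intro!: sum.cong)
      finally show ?thesis using v True by auto
    next
      case False
      have "(four_block_mat A B (0\<^sub>m n2 n1) D *\<^sub>v ?w) $ i = row (four_block_mat A B (0\<^sub>m n2 n1) D) i \<bullet> ?w"
        using i v A D by auto
      also have "\<dots> = (\<Sum>j<n1+n2. four_block_mat A B (0\<^sub>m n2 n1) D $$ (i,j) * ?w $ j)"
        unfolding scalar_prod_def using v A D i by (auto intro!: sum.cong simp: atLeast0LessThan)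
      also have "\<dots> = 0"
        by (rule sum.neutral, insert v A D False i, auto)
      finally show ?thesis using v False i by auto
    qed
  qed (insert v A D, auto)
  moreover have "?w \<noteq> 0\<^sub>v (n1+n2)"
  proof
    assume "?w = 0\<^sub>v (n1+n2)"
    then have "v = 0\<^sub>v n1"
    proof -
      assume h: "?w = 0\<^sub>v (n1+n2)"
      show ?thesis
      proof (rule eq_vecI)
        fix i assume "i < dim_vec (0\<^sub>v n1 :: 'a vec)"
        then have "?w $ i = 0" using h by auto
        then show "v $ i = 0\<^sub>v n1 $ i" using \<open>i < _\<close> v by auto
      qed (insert v, auto)
    qed
    with v show False by auto
  qed
  ultimately have "eigenvector (four_block_mat A B (0\<^sub>m n2 n1) D) ?w z"
    unfolding eigenvector_def using v A D by auto
  then show ?thesis unfolding eigenvalue_def by auto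
qed



lemma eig_four_block_diag_D:
  fixes A :: "'a::comm_ring_1 mat"
  assumes A: "A \<in> carrier_mat n1 n1" and D: "D \<in> carrier_mat n2 n2"
    and ev: "eigenvalue D z"
  shows "eigenvalue (four_block_mat A (0\<^sub>m n1 n2) (0\<^sub>m n2 n1) D) z"
proof -
  from ev obtain v where v: "v \<in> carrier_vec n2" "v \<noteq> 0\<^sub>v n2" "D *\<^sub>v v = z \<cdot>\<^sub>v v"
    unfolding eigenvalue_def eigenvector_def using D by auto
  let ?w = "0\<^sub>v n1 @\<^sub>v v"
  have "four_block_mat A (0\<^sub>m n1 n2) (0\<^sub>m n2 n1) D *\<^sub>v ?w
     = (A *\<^sub>v 0\<^sub>v n1 + 0\<^sub>m n1 n2 *\<^sub>v v) @\<^sub>v (0\<^sub>m n2 n1 *\<^sub>v 0\<^sub>v n1 + D *\<^sub>v v)"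
    by (rule four_block_mat_mult_vec[OF A _ _ D], insert v, auto)
  also have "\<dots> = (z \<cdot>\<^sub>v 0\<^sub>v n1) @\<^sub>v (z \<cdot>\<^sub>v v)"
  proof -
    have "A *\<^sub>v 0\<^sub>v n1 + 0\<^sub>m n1 n2 *\<^sub>v v = z \<cdot>\<^sub>v 0\<^sub>v n1"
      using A v by (intro eq_vecI, auto simp: scalar_prod_def)
    moreover have "0\<^sub>m n2 n1 *\<^sub>v 0\<^sub>v n1 + D *\<^sub>v v = z \<cdot>\<^sub>v v"
      using D v by (intro eq_vecI, auto simp: scalar_prod_def)
    ultimately show ?thesis by simp
  qed
  also have "\<dots> = z \<cdot>\<^sub>v ?w" by (simp add: smult_append_vec)
  finally have e: "four_block_mat A (0\<^sub>m n1 n2) (0\<^sub>m n2 n1) D *\<^sub>v ?w = z \<cdot>\<^sub>v ?w" .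
  have "?w \<noteq> 0\<^sub>v (n1+n2)"
  proof
    assume h: "?w = 0\<^sub>v (n1+n2)"
    have "v = 0\<^sub>v n2"
    proof (rule eq_vecI)
      fix i assume i: "i < dim_vec (0\<^sub>v n2 :: 'a vec)"
      then have "?w $ (n1 + i) = 0" using h by auto
      then show "v $ i = 0\<^sub>v n2 $ i" using i v by auto
    qed (insert v, auto)
    with v show False by auto
  qed
  then have "eigenvector (four_block_mat A (0\<^sub>m n1 n2) (0\<^sub>m n2 n1) D) ?w z"
    unfolding eigenvector_def using v A D e by auto
  then show ?thesis unfolding eigenvalue_def by auto
qed

lemma diag_block_carrier:
  "(\<forall>i\<in>set is. F i \<in> carrier_mat (r i) (c i)) \<Longrightarrow>
   diag_block_mat (map F is) \<in> carrier_mat (sum_list (map r is)) (sum_list (map c is))"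
  by (induct "is") (auto simp: Let_def)

lemma diag_block_eig:
  fixes G :: "nat \<Rightarrow> 'a::comm_ring_1 mat"
  assumes "\<forall>i\<in>set is. G i \<in> carrier_mat (r i) (r i)"
  shows "eigenvalue (diag_block_mat (map G is)) z \<longleftrightarrow> (\<exists>i\<in>set is. eigenvalue (G i) z)"
  using assms
proof (induct "is")
  case Nil
  show ?case unfolding eigenvalue_def eigenvector_def by auto
next
  case (Cons j js)
  let ?D = "diag_block_mat (map G js)"
  have Gj: "G j \<in> carrier_mat (r j) (r j)" using Cons by auto
  have Dc: "?D \<in> carrier_mat (sum_list (map r js)) (sum_list (map r js))"
    using diag_block_carrier[of js G r r] Cons by auto
  have eq: "diag_block_mat (map G (j # js)) = four_block_mat (G j) (0\<^sub>m (r j) (sum_list (map r js)))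
     (0\<^sub>m (sum_list (map r js)) (r j)) ?D"
    using Gj Dc by (simp add: Let_def)
  show ?case
  proof
    assume "eigenvalue (diag_block_mat (map G (j # js))) z"
    then have "eigenvalue (G j) z \<or> eigenvalue ?D z"
      unfolding eq by (rule eig_four_block_D[OF Gj _ Dc, rotated], auto)
    then show "\<exists>i\<in>set (j # js). eigenvalue (G i) z" using Cons by auto
  next
    assume "\<exists>i\<in>set (j # js). eigenvalue (G i) z"
    then have "eigenvalue (G j) z \<or> eigenvalue ?D z" using Cons by auto
    then show "eigenvalue (diag_block_mat (map G (j # js))) z"
    proof
      assume "eigenvalue (G j) z"
      then show ?thesis unfolding eq by (rule eig_four_block_A[OF Gj _ Dc, rotated], auto)
    next
      assume "eigenvalue ?D z"
      then show ?thesis unfolding eq by (rule eig_four_block_diag_D[OF Gj Dc])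
    qed
  qed
qed

lemma map_diag_block:
  assumes "f 0 = 0"
  shows "map_mat f (diag_block_mat As) = diag_block_mat (map (map_mat f) As)"
proof (induct As)
  case Nil
  show ?case by (auto intro!: eq_matI)
next
  case (Cons A As)
  let ?D = "diag_block_mat As"
  have "map_mat f (diag_block_mat (A # As)) = four_block_mat (map_mat f A)
     (map_mat f (0\<^sub>m (dim_row A) (dim_col ?D))) (map_mat f (0\<^sub>m (dim_row ?D) (dim_col A))) (map_mat f ?D)"
    by (simp add: Let_def map_four_block_mat[of A "dim_row A" "dim_col A" _ "dim_col ?D" _ "dim_row ?D"])
  also have "\<dots> = diag_block_mat (map (map_mat f) (A # As))"
    using Cons assms by (auto simp: Let_def dim_diag_block_mat o_def intro!: cong_four_block_mat eq_matI)
  finally show ?case .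
qed

lemma diag_block_ABK:
  fixes A B K :: "nat \<Rightarrow> 'a::comm_ring_1 mat"
  assumes "\<forall>i\<in>set is. A i \<in> carrier_mat (n i) (n i) \<and> B i \<in> carrier_mat (n i) (m i) \<and> K i \<in> carrier_mat (m i) (n i)"
  shows "diag_block_mat (map A is) + diag_block_mat (map B is) * diag_block_mat (map K is)
    = diag_block_mat (map (\<lambda>i. A i + B i * K i) is)"
  using assms
proof (induct "is")
  case Nil
  show ?case by (auto intro!: eq_matI)
next
  case (Cons j js)
  let ?sn = "sum_list (map n js)" and ?sm = "sum_list (map m js)"
  let ?DA = "diag_block_mat (map A js)" and ?DB = "diag_block_mat (map B js)" and ?DK = "diag_block_mat (map K js)"
  have c: "A j \<in> carrier_mat (n j) (n j)" "B j \<in> carrier_mat (n j) (m j)" "K j \<in> carrier_mat (m j) (n j)"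
    using Cons by auto
  have DA: "?DA \<in> carrier_mat ?sn ?sn" using diag_block_carrier[of js A n n] Cons by auto
  have DB: "?DB \<in> carrier_mat ?sn ?sm" using diag_block_carrier[of js B n m] Cons by auto
  have DK: "?DK \<in> carrier_mat ?sm ?sn" using diag_block_carrier[of js K m n] Cons by auto
  have IH: "?DA + ?DB * ?DK = diag_block_mat (map (\<lambda>i. A i + B i * K i) js)" using Cons by auto
  have eA: "diag_block_mat (map A (j # js)) = four_block_mat (A j) (0\<^sub>m (n j) ?sn) (0\<^sub>m ?sn (n j)) ?DA"
    using c DA by (simp add: Let_def)
  have eB: "diag_block_mat (map B (j # js)) = four_block_mat (B j) (0\<^sub>m (n j) ?sm) (0\<^sub>m ?sn (m j)) ?DB"
    using c DB by (simp add: Let_def)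
  have eK: "diag_block_mat (map K (j # js)) = four_block_mat (K j) (0\<^sub>m (m j) ?sn) (0\<^sub>m ?sm (n j)) ?DK"
    using c DK by (simp add: Let_def)
  have eG: "diag_block_mat (map (\<lambda>i. A i + B i * K i) (j # js)) =
     four_block_mat (A j + B j * K j) (0\<^sub>m (n j) ?sn) (0\<^sub>m ?sn (n j)) (diag_block_mat (map (\<lambda>i. A i + B i * K i) js))"
    using c DA DB DK IH[symmetric] by (simp add: Let_def)
  have BK: "diag_block_mat (map B (j # js)) * diag_block_mat (map K (j # js)) =
     four_block_mat (B j * K j + 0\<^sub>m (n j) ?sm * 0\<^sub>m ?sm (n j)) (B j * 0\<^sub>m (m j) ?sn + 0\<^sub>m (n j) ?sm * ?DK)
       (0\<^sub>m ?sn (m j) * K j + ?DB * 0\<^sub>m ?sm (n j)) (0\<^sub>m ?sn (m j) * 0\<^sub>m (m j) ?sn + ?DB * ?DK)"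
    unfolding eB eK by (rule mult_four_block_mat, insert c DB DK, auto)
  also have "\<dots> = four_block_mat (B j * K j) (0\<^sub>m (n j) ?sn) (0\<^sub>m ?sn (n j)) (?DB * ?DK)"
    using c DB DK by (intro cong_four_block_mat, auto)
  finally have BK': "diag_block_mat (map B (j # js)) * diag_block_mat (map K (j # js)) =
      four_block_mat (B j * K j) (0\<^sub>m (n j) ?sn) (0\<^sub>m ?sn (n j)) (?DB * ?DK)" .
  have "four_block_mat (A j) (0\<^sub>m (n j) ?sn) (0\<^sub>m ?sn (n j)) ?DA +
        four_block_mat (B j * K j) (0\<^sub>m (n j) ?sn) (0\<^sub>m ?sn (n j)) (?DB * ?DK)
      = four_block_mat (A j + B j * K j) (0\<^sub>m (n j) ?sn + 0\<^sub>m (n j) ?sn) (0\<^sub>m ?sn (n j) + 0\<^sub>m ?sn (n j)) (?DA + ?DB * ?DK)"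
    by (rule add_four_block_mat, insert c DA DB DK, auto)
  also have "\<dots> = four_block_mat (A j + B j * K j) (0\<^sub>m (n j) ?sn) (0\<^sub>m ?sn (n j)) (?DA + ?DB * ?DK)"
    by simp
  finally show ?case unfolding eG BK' eA IH[symmetric] .
qed



definition Lo_of :: "real mat \<Rightarrow> real mat \<Rightarrow> real \<Rightarrow> real mat" where
  "Lo_of S H \<mu> = kron (1\<^sub>m (dim_row H)) S - \<mu> \<cdot>\<^sub>m kron H (1\<^sub>m (dim_row S))"

lemma kron_carrier: "kron P Q \<in> carrier_mat (dim_row P * dim_row Q) (dim_col P * dim_col Q)"
  unfolding kron_def by auto

lemma Lo_carrier: "S \<in> carrier_mat q q \<Longrightarrow> H \<in> carrier_mat N N \<Longrightarrow> Lo_of S H \<mu> \<in> carrier_mat (N*q) (N*q)"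
  unfolding Lo_of_def kron_def by auto

lemma closed_loop_eig:
  fixes Ai Bi K1 K2 :: "nat \<Rightarrow> real mat"
  assumes c: "\<forall>i\<in>{1..N}. Ai i \<in> carrier_mat (n i) (n i) \<and> Bi i \<in> carrier_mat (n i) (m i)
       \<and> K1 i \<in> carrier_mat (m i) (n i) \<and> K2 i \<in> carrier_mat (m i) q"
    and S: "S \<in> carrier_mat q q" and H: "H \<in> carrier_mat N N"
  shows "(eigenvalue (map_mat complex_of_real (closed_loop (bdiag Ai N) (bdiag Bi N) (bdiag K1 N) (bdiag K2 N) S H \<mu>)) z
     \<longrightarrow> (\<exists>i\<in>{1..N}. eigenvalue (map_mat complex_of_real (Ai i + Bi i * K1 i)) z)
        \<or> eigenvalue (map_mat complex_of_real (Lo_of S H \<mu>)) z) \<and>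
     ((\<exists>i\<in>{1..N}. eigenvalue (map_mat complex_of_real (Ai i + Bi i * K1 i)) z) \<longrightarrow>
       eigenvalue (map_mat complex_of_real (closed_loop (bdiag Ai N) (bdiag Bi N) (bdiag K1 N) (bdiag K2 N) S H \<mu>)) z) \<and>
     dim_row (closed_loop (bdiag Ai N) (bdiag Bi N) (bdiag K1 N) (bdiag K2 N) S H \<mu>) =
     dim_col (closed_loop (bdiag Ai N) (bdiag Bi N) (bdiag K1 N) (bdiag K2 N) S H \<mu>)"
   (is "(?L \<longrightarrow> ?R1 \<or> ?R2) \<and> (?R1 \<longrightarrow> ?L) \<and> ?Sq")
proof -
  let ?is = "[1..<Suc N]"
  let ?sn = "sum_list (map n ?is)" and ?sm = "sum_list (map m ?is)"
  let ?AA = "bdiag Ai N" and ?BB = "bdiag Bi N" and ?KK = "bdiag K1 N" and ?KK2 = "bdiag K2 N"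
  let ?G = "\<lambda>i. Ai i + Bi i * K1 i"
  let ?Lo = "Lo_of S H \<mu>"
  have setis: "set ?is = {1..N}" by auto
  have c': "\<forall>i\<in>set ?is. Ai i \<in> carrier_mat (n i) (n i) \<and> Bi i \<in> carrier_mat (n i) (m i) \<and> K1 i \<in> carrier_mat (m i) (n i)"
    using c setis by auto
  have AA: "?AA \<in> carrier_mat ?sn ?sn" unfolding bdiag_def by (rule diag_block_carrier, insert c', auto)
  have BB: "?BB \<in> carrier_mat ?sn ?sm" unfolding bdiag_def by (rule diag_block_carrier, insert c', auto)
  have KK: "?KK \<in> carrier_mat ?sm ?sn" unfolding bdiag_def by (rule diag_block_carrier, insert c', auto)
  have KK2': "?KK2 \<in> carrier_mat ?sm (sum_list (map (\<lambda>_. q) ?is))" unfolding bdiag_def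
    by (rule diag_block_carrier, insert c setis, auto)
  have sq: "sum_list (map (\<lambda>_. q) ?is) = N * q" by (simp add: sum_list_triv)
  have KK2: "?KK2 \<in> carrier_mat ?sm (N*q)" using KK2' sq by simp
  have Lo: "?Lo \<in> carrier_mat (N*q) (N*q)" by (rule Lo_carrier[OF S H])
  have ABK: "?AA + ?BB * ?KK = diag_block_mat (map ?G ?is)"
    unfolding bdiag_def by (rule diag_block_ABK, insert c', auto)
  have Gc: "\<forall>i\<in>set ?is. map_mat complex_of_real (?G i) \<in> carrier_mat (n i) (n i)" using c' by auto
  have CL: "closed_loop ?AA ?BB ?KK ?KK2 S H \<mu> = four_block_mat (?AA + ?BB * ?KK) (?BB * ?KK2) (0\<^sub>m (N*q) ?sn) ?Lo"
    unfolding closed_loop_def Lo_of_def Let_def using AA H S by (simp add: kron_def)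
  have mCL: "map_mat complex_of_real (closed_loop ?AA ?BB ?KK ?KK2 S H \<mu>) =
     four_block_mat (map_mat complex_of_real (?AA + ?BB * ?KK)) (map_mat complex_of_real (?BB * ?KK2))
        (0\<^sub>m (N*q) ?sn) (map_mat complex_of_real ?Lo)"
    unfolding CL by (subst map_four_block_mat[of _ ?sn ?sn _ "N*q" _ "N*q"], insert AA BB KK KK2 Lo,
       auto intro!: cong_four_block_mat eq_matI)
  have mG: "map_mat complex_of_real (?AA + ?BB * ?KK) = diag_block_mat (map (\<lambda>i. map_mat complex_of_real (?G i)) ?is)"
    unfolding ABK by (subst map_diag_block, auto simp: o_def)
  have eigG: "eigenvalue (map_mat complex_of_real (?AA + ?BB * ?KK)) z \<longleftrightarrow> ?R1"
    unfolding mG using diag_block_eig[OF Gc] setis by auto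
  have c1: "map_mat complex_of_real (?AA + ?BB * ?KK) \<in> carrier_mat ?sn ?sn"
    unfolding map_carrier_mat by (rule add_carrier_mat, rule mult_carrier_mat[OF BB KK])
  have c2: "map_mat complex_of_real (?BB * ?KK2) \<in> carrier_mat ?sn (N*q)"
    unfolding map_carrier_mat by (rule mult_carrier_mat[OF BB KK2])
  have c3: "map_mat complex_of_real ?Lo \<in> carrier_mat (N*q) (N*q)"
    unfolding map_carrier_mat by (rule Lo)
  have sqc: ?Sq unfolding CL using AA BB KK Lo by simp
  show ?thesis
  proof (intro conjI impI sqc)
    assume ?L
    then show "?R1 \<or> ?R2" unfolding mCL using eig_four_block_D[OF c1 c2 c3] eigG by blast
  next
    assume ?R1
    then show ?L unfolding mCL using eig_four_block_A[OF c1 c2 c3] eigG by blast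
  qed
qed



lemma alt_lemma:
  fixes M :: "nat \<Rightarrow> nat \<Rightarrow> real"
  shows "(\<exists>y. \<forall>k<r. (\<Sum>j<c. M k j * y j) = g k) \<or>
         (\<exists>\<xi>. (\<forall>j<c. (\<Sum>k<r. \<xi> k * M k j) = 0) \<and> (\<Sum>k<r. \<xi> k * g k) \<noteq> 0)"
proof (induct c arbitrary: g)
  case 0
  show ?case
  proof (cases "\<forall>k<r. g k = 0")
    case True
    then show ?thesis by auto
  next
    case False
    then obtain k0 where k0: "k0 < r" "g k0 \<noteq> 0" by auto
    have "(\<Sum>k<r. g k * g k) \<noteq> 0"
    proof
      assume "(\<Sum>k<r. g k * g k) = 0"
      then have "\<forall>k\<in>{..<r}. g k * g k = 0"
        by (subst (asm) sum_nonneg_eq_0_iff, auto)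
      with k0 show False by auto
    qed
    then show ?thesis by auto
  qed
next
  case (Suc c)
  let ?m = "\<lambda>k. M k c"
  from Suc[of ?m] show ?case
  proof
    assume "\<exists>y. \<forall>k<r. (\<Sum>j<c. M k j * y j) = ?m k"
    then obtain y' where y': "\<And>k. k<r \<Longrightarrow> (\<Sum>j<c. M k j * y' j) = ?m k" by auto
    from Suc[of g] show ?thesis
    proof
      assume "\<exists>y. \<forall>k<r. (\<Sum>j<c. M k j * y j) = g k"
      then obtain y where y: "\<And>k. k<r \<Longrightarrow> (\<Sum>j<c. M k j * y j) = g k" by auto
      have "\<forall>k<r. (\<Sum>j<Suc c. M k j * (y(c := 0)) j) = g k"
      proof (intro allI impI)
        fix k assume k: "k < r"
        have "(\<Sum>j<Suc c. M k j * (y(c := 0)) j) = (\<Sum>j<c. M k j * (y(c := 0)) j)" by simp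
        also have "\<dots> = (\<Sum>j<c. M k j * y j)" by (rule sum.cong, auto)
        finally show "(\<Sum>j<Suc c. M k j * (y(c := 0)) j) = g k" using y[OF k] by simp
      qed
      then show ?thesis by blast
    next
      assume "\<exists>\<xi>. (\<forall>j<c. (\<Sum>k<r. \<xi> k * M k j) = 0) \<and> (\<Sum>k<r. \<xi> k * g k) \<noteq> 0"
      then obtain \<xi> where xi: "\<And>j. j<c \<Longrightarrow> (\<Sum>k<r. \<xi> k * M k j) = 0" "(\<Sum>k<r. \<xi> k * g k) \<noteq> 0" by auto
      have "(\<Sum>k<r. \<xi> k * M k c) = (\<Sum>k<r. \<xi> k * (\<Sum>j<c. M k j * y' j))"
        by (rule sum.cong, auto simp: y')
      also have "\<dots> = (\<Sum>j<c. y' j * (\<Sum>k<r. \<xi> k * M k j))"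
        by (simp add: sum_distrib_left sum_distrib_right sum.swap[of _ "{..<c}"] mult.commute mult.left_commute)
      also have "\<dots> = 0" by (simp add: xi)
      finally have "\<forall>j<Suc c. (\<Sum>k<r. \<xi> k * M k j) = 0" using xi(1) less_Suc_eq by auto
      then show ?thesis using xi(2) by blast
    qed
  next
    assume "\<exists>\<xi>. (\<forall>j<c. (\<Sum>k<r. \<xi> k * M k j) = 0) \<and> (\<Sum>k<r. \<xi> k * ?m k) \<noteq> 0"
    then obtain \<xi>1 where x1: "\<And>j. j<c \<Longrightarrow> (\<Sum>k<r. \<xi>1 k * M k j) = 0" "(\<Sum>k<r. \<xi>1 k * ?m k) \<noteq> 0" by auto
    define s1 where "s1 = (\<Sum>k<r. \<xi>1 k * ?m k)"
    define t where "t = (\<Sum>k<r. \<xi>1 k * g k) / s1"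
    have s1: "s1 \<noteq> 0" using x1(2) s1_def by simp
    from Suc[of "\<lambda>k. g k - t * ?m k"] show ?thesis
    proof
      assume "\<exists>y. \<forall>k<r. (\<Sum>j<c. M k j * y j) = g k - t * ?m k"
      then obtain y where y: "\<And>k. k<r \<Longrightarrow> (\<Sum>j<c. M k j * y j) = g k - t * ?m k" by auto
      have "\<forall>k<r. (\<Sum>j<Suc c. M k j * (y(c := t)) j) = g k"
      proof (intro allI impI)
        fix k assume k: "k < r"
        have "(\<Sum>j<Suc c. M k j * (y(c := t)) j) = (\<Sum>j<c. M k j * (y(c := t)) j) + M k c * t" by simp
        also have "(\<Sum>j<c. M k j * (y(c := t)) j) = (\<Sum>j<c. M k j * y j)" by (rule sum.cong, auto)
        finally show "(\<Sum>j<Suc c. M k j * (y(c := t)) j) = g k" using y[OF k] by simp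
      qed
      then show ?thesis by blast
    next
      assume "\<exists>\<xi>. (\<forall>j<c. (\<Sum>k<r. \<xi> k * M k j) = 0) \<and> (\<Sum>k<r. \<xi> k * (g k - t * ?m k)) \<noteq> 0"
      then obtain \<xi>2 where x2: "\<And>j. j<c \<Longrightarrow> (\<Sum>k<r. \<xi>2 k * M k j) = 0"
          "(\<Sum>k<r. \<xi>2 k * (g k - t * ?m k)) \<noteq> 0" by auto
      define s where "s = (\<Sum>k<r. \<xi>2 k * ?m k) / s1"
      define \<xi> where "\<xi> = (\<lambda>k. \<xi>2 k - s * \<xi>1 k)"
      have lin: "\<And>f. (\<Sum>k<r. \<xi> k * f k) = (\<Sum>k<r. \<xi>2 k * f k) - s * (\<Sum>k<r. \<xi>1 k * f k)"
        unfolding \<xi>_def by (simp add: algebra_simps sum_subtractf sum_distrib_left)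
      have "\<forall>j<Suc c. (\<Sum>k<r. \<xi> k * M k j) = 0"
      proof (intro allI impI)
        fix j assume "j < Suc c"
        then consider "j < c" | "j = c" by linarith
        then show "(\<Sum>k<r. \<xi> k * M k j) = 0"
        proof cases
          case 1
          then show ?thesis using lin[of "\<lambda>k. M k j"] x1(1) x2(1) by simp
        next
          case 2
          then show ?thesis using lin[of "\<lambda>k. M k j"] s1 unfolding s_def s1_def by simp
        qed
      qed
      moreover have "(\<Sum>k<r. \<xi> k * g k) \<noteq> 0"
      proof -
        have "(\<Sum>k<r. \<xi> k * g k) = (\<Sum>k<r. \<xi>2 k * g k) - s * (\<Sum>k<r. \<xi>1 k * g k)" by (rule lin)
        also have "s * (\<Sum>k<r. \<xi>1 k * g k) = (\<Sum>k<r. \<xi>2 k * ?m k) * t"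
          unfolding s_def t_def using s1 by simp
        also have "(\<Sum>k<r. \<xi>2 k * g k) - (\<Sum>k<r. \<xi>2 k * ?m k) * t = (\<Sum>k<r. \<xi>2 k * (g k - t * ?m k))"
          by (simp add: algebra_simps sum_subtractf sum_distrib_left sum_distrib_right)
        finally show ?thesis using x2(2) by simp
      qed
      ultimately show ?thesis by blast
    qed
  qed
qed



lemma sum_lessThan_add: "(\<Sum>k<(a::nat)+b. f k) = (\<Sum>k<a. f k) + (\<Sum>l<b. (f (a+l) :: 'a::comm_monoid_add))"
  by (induct b) (auto simp: add.assoc)

lemma hurwitz_no_real_zero:
  assumes h: "hurwitz G" and G: "G \<in> carrier_mat n n" and v: "v \<in> carrier_vec n" "v \<noteq> 0\<^sub>v n"
    and Gv: "G *\<^sub>v v = 0\<^sub>v n"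
  shows False
proof -
  let ?v = "map_vec complex_of_real v"
  have "map_mat complex_of_real G *\<^sub>v ?v = map_vec complex_of_real (G *\<^sub>v v)"
    by (rule of_real_hom.mult_mat_vec_hom[OF G v(1), symmetric])
  also have "\<dots> = 0 \<cdot>\<^sub>v ?v" unfolding Gv using v(1) by (intro eq_vecI, auto)
  finally have e: "map_mat complex_of_real G *\<^sub>v ?v = 0 \<cdot>\<^sub>v ?v" .
  have "?v \<noteq> 0\<^sub>v n"
  proof
    assume "?v = 0\<^sub>v n"
    then have "v = 0\<^sub>v n" using v(1) by (intro eq_vecI, auto dest!: arg_cong[of _ _ "\<lambda>x. x $ _"])
    with v(2) show False by simp
  qed
  then have "eigenvector (map_mat complex_of_real G) ?v 0" unfolding eigenvector_def using G v e by auto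
  then have "eigenvalue (map_mat complex_of_real G) 0" unfolding eigenvalue_def by auto
  with h show False unfolding hurwitz_def by auto
qed

lemma agent_forward:
  fixes X U K A0 B0 :: "real mat"
  assumes X: "X \<in> carrier_mat n r" and U: "U \<in> carrier_mat mm r" and K: "K \<in> carrier_mat mm n"
    and A0: "A0 \<in> carrier_mat n n" and B0: "B0 \<in> carrier_mat n mm"
    and P: "\<And>A B. A \<in> carrier_mat n n \<Longrightarrow> B \<in> carrier_mat n mm \<Longrightarrow>
              A * X + B * U = A0 * X + B0 * U \<Longrightarrow> hurwitz (A + B * K)"
  shows "\<exists>Xp \<in> carrier_mat r n. X * Xp = 1\<^sub>m n \<and> U * Xp = K"
proof -
  define M where "M = (\<lambda>k j. if k < n then X $$ (k,j) else U $$ (k-n, j))"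
  define g where "g = (\<lambda>p k. if k < n then (if k = p then 1 else 0) else K $$ (k-n, p) :: real)"
  have claim: "\<forall>p<n. \<exists>y. \<forall>k<n+mm. (\<Sum>j<r. M k j * y j) = g p k"
  proof (intro allI impI)
    fix p assume p: "p < n"
    from alt_lemma[where M=M and r="n+mm" and c=r and g="g p"] show "\<exists>y. \<forall>k<n+mm. (\<Sum>j<r. M k j * y j) = g p k"
    proof
      assume "\<exists>\<xi>. (\<forall>j<r. (\<Sum>k<n+mm. \<xi> k * M k j) = 0) \<and> (\<Sum>k<n+mm. \<xi> k * g p k) \<noteq> 0"
      then obtain \<xi> where xi: "\<And>j. j<r \<Longrightarrow> (\<Sum>k<n+mm. \<xi> k * M k j) = 0"
        "(\<Sum>k<n+mm. \<xi> k * g p k) \<noteq> 0" by auto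
      define c where "c = vec n (\<lambda>b. \<Sum>k<n+mm. \<xi> k * g b k)"
      have cb: "c $ b = \<xi> b + (\<Sum>l<mm. \<xi> (n+l) * K $$ (l,b))" if b: "b < n" for b
      proof -
        have "c $ b = (\<Sum>k<n. \<xi> k * g b k) + (\<Sum>l<mm. \<xi> (n+l) * g b (n+l))"
          unfolding c_def using b by (simp add: sum_lessThan_add)
        also have "(\<Sum>k<n. \<xi> k * g b k) = (\<Sum>k<n. if k = b then \<xi> k else 0)"
          unfolding g_def by (rule sum.cong, auto)
        also have "\<dots> = \<xi> b" using b by simp
        finally show ?thesis unfolding g_def by simp
      qed
      have cp: "c $ p \<noteq> 0" using xi(2) p unfolding c_def by simp
      have cc: "c \<in> carrier_vec n" unfolding c_def by simp
      define cc where "cc = c \<bullet> c"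
      have cc_eq: "cc = (\<Sum>b<n. c $ b * c $ b)" unfolding cc_def scalar_prod_def using cc
        by (simp add: atLeast0LessThan)
      have cc_pos: "cc > 0"
      proof -
        have "cc \<ge> 0" unfolding cc_eq by (intro sum_nonneg, auto)
        moreover have "cc \<noteq> 0"
        proof
          assume "cc = 0"
          then have "\<forall>b\<in>{..<n}. c $ b * c $ b = 0" unfolding cc_eq
            by (subst (asm) sum_nonneg_eq_0_iff, auto)
          with p cp show False by auto
        qed
        ultimately show ?thesis by auto
      qed
      define v where "v = (1/cc) \<cdot>\<^sub>v c"
      have vc: "v \<in> carrier_vec n" unfolding v_def using cc by simp
      have v0: "v \<noteq> 0\<^sub>v n"
      proof
        assume "v = 0\<^sub>v n"
        then have "v $ p = 0" using p by simp
        then show False unfolding v_def using cp cc_pos p cc by simp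
      qed
      have cv: "c \<bullet> v = 1" unfolding v_def using cc cc_pos unfolding cc_def by simp
      define G0 where "G0 = A0 + B0 * K"
      have G0: "G0 \<in> carrier_mat n n" unfolding G0_def using A0 B0 K by simp
      define w where "w = - (G0 *\<^sub>v v)"
      have wc: "w \<in> carrier_vec n" unfolding w_def using G0 vc by simp
      define W1 where "W1 = mat n n (\<lambda>(a,b). w $ a * \<xi> b)"
      define W2 where "W2 = mat n mm (\<lambda>(a,l). w $ a * \<xi> (n+l))"
      define Wc where "Wc = mat n n (\<lambda>(a,b). w $ a * c $ b)"
      have W1: "W1 \<in> carrier_mat n n" and W2: "W2 \<in> carrier_mat n mm" and Wcc: "Wc \<in> carrier_mat n n"
        unfolding W1_def W2_def Wc_def by auto
      have WXU: "(W1 * X) $$ (a,j) + (W2 * U) $$ (a,j) = 0" if a: "a < n" and j: "j < r" for a j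
      proof -
        have "(W1 * X) $$ (a,j) = (\<Sum>b<n. w $ a * \<xi> b * X $$ (b,j))"
          using a j X unfolding W1_def by (simp add: scalar_prod_def atLeast0LessThan)
        moreover have "(W2 * U) $$ (a,j) = (\<Sum>l<mm. w $ a * \<xi> (n+l) * U $$ (l,j))"
          using a j U unfolding W2_def by (simp add: scalar_prod_def atLeast0LessThan)
        moreover have "(\<Sum>k<n+mm. \<xi> k * M k j) = (\<Sum>b<n. \<xi> b * X $$ (b,j)) + (\<Sum>l<mm. \<xi> (n+l) * U $$ (l,j))"
          unfolding sum_lessThan_add M_def by simp
        ultimately have "(W1 * X) $$ (a,j) + (W2 * U) $$ (a,j) = w $ a * (\<Sum>k<n+mm. \<xi> k * M k j)"
          by (simp add: sum_distrib_left algebra_simps)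
        then show ?thesis using xi(1)[OF j] by simp
      qed
      have WK: "(W1 + W2 * K) $$ (a,b) = Wc $$ (a,b)" if a: "a < n" and b: "b < n" for a b
      proof -
        have "(W2 * K) $$ (a,b) = (\<Sum>l<mm. w $ a * \<xi> (n+l) * K $$ (l,b))"
          using a b K unfolding W2_def by (simp add: scalar_prod_def atLeast0LessThan)
        then show ?thesis using a b W1 W2 K cb[OF b] unfolding W1_def Wc_def
          by (simp add: sum_distrib_left algebra_simps)
      qed
      define A where "A = A0 + W1"
      define B where "B = B0 + W2"
      have Ac: "A \<in> carrier_mat n n" and Bc: "B \<in> carrier_mat n mm" unfolding A_def B_def using A0 B0 W1 W2 by auto
      have AX: "A * X = A0 * X + W1 * X" unfolding A_def by (rule add_mult_distrib_mat[OF A0 W1 X])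
      have BU: "B * U = B0 * U + W2 * U" unfolding B_def by (rule add_mult_distrib_mat[OF B0 W2 U])
      have "A * X + B * U = A0 * X + B0 * U"
        unfolding AX BU
      proof (rule eq_matI)
        fix a j assume "a < dim_row (A0 * X + B0 * U)" "j < dim_col (A0 * X + B0 * U)"
        then have a: "a < n" and j: "j < r" using A0 X B0 U by auto
        show "(A0 * X + W1 * X + (B0 * U + W2 * U)) $$ (a, j) = (A0 * X + B0 * U) $$ (a, j)"
          using WXU[OF a j] a j A0 X B0 U W1 W2 by simp
      qed (insert A0 X B0 U W1 W2, auto)
      then have hAB: "hurwitz (A + B * K)" by (rule P[OF Ac Bc])
      have BK: "B * K = B0 * K + W2 * K" unfolding B_def by (rule add_mult_distrib_mat[OF B0 W2 K])
      have ABK: "A + B * K = G0 + Wc"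
      proof (rule eq_matI)
        fix a b assume "a < dim_row (G0 + Wc)" "b < dim_col (G0 + Wc)"
        then have a: "a < n" and b: "b < n" using G0 Wcc by auto
        have "(W1 + W2 * K) $$ (a,b) = W1 $$ (a,b) + (W2 * K) $$ (a,b)" using a b W1 W2 K by simp
        then show "(A + B * K) $$ (a, b) = (G0 + Wc) $$ (a, b)"
          unfolding BK A_def G0_def using WK[OF a b] a b A0 B0 K W1 W2 Wcc by simp
      qed (insert G0 Wcc A0 B0 W1 W2 K, auto simp: A_def B_def)
      have Wcv: "Wc *\<^sub>v v = w"
      proof (rule eq_vecI)
        fix a assume "a < dim_vec w"
        then have a: "a < n" using wc by auto
        have "(Wc *\<^sub>v v) $ a = (\<Sum>b<n. w $ a * c $ b * v $ b)"
          using a vc unfolding Wc_def by (simp add: scalar_prod_def atLeast0LessThan)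
        also have "\<dots> = w $ a * (c \<bullet> v)" using vc cc
          by (simp add: scalar_prod_def atLeast0LessThan sum_distrib_left algebra_simps)
        finally show "(Wc *\<^sub>v v) $ a = w $ a" using cv by simp
      qed (insert wc Wcc, auto)
      have "(A + B * K) *\<^sub>v v = 0\<^sub>v n"
      proof -
        have "(A + B * K) *\<^sub>v v = G0 *\<^sub>v v + Wc *\<^sub>v v" unfolding ABK
          by (rule add_mult_distrib_mat_vec[OF G0 Wcc vc])
        also have "\<dots> = 0\<^sub>v n" unfolding Wcv w_def using G0 vc by (intro eq_vecI, auto)
        finally show ?thesis .
      qed
      moreover have "A + B * K \<in> carrier_mat n n" using Ac Bc K by simp
      ultimately have False using hurwitz_no_real_zero[OF hAB _ vc v0] by auto
      then show ?thesis ..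
    qed
  qed
  then obtain Y where Y: "\<And>p k. p < n \<Longrightarrow> k < n+mm \<Longrightarrow> (\<Sum>j<r. M k j * Y p j) = g p k" by metis
  define Xp where "Xp = mat r n (\<lambda>(j,p). Y p j)"
  have Xpc: "Xp \<in> carrier_mat r n" unfolding Xp_def by simp
  have "X * Xp = 1\<^sub>m n"
  proof (rule eq_matI)
    fix k p assume "k < dim_row (1\<^sub>m n :: real mat)" "p < dim_col (1\<^sub>m n :: real mat)"
    then have k: "k < n" and p: "p < n" by auto
    have "(X * Xp) $$ (k,p) = (\<Sum>j<r. M k j * Y p j)"
      using k p X unfolding Xp_def M_def by (simp add: scalar_prod_def atLeast0LessThan)
    also have "\<dots> = g p k" using Y[OF p] k by simp
    finally show "(X * Xp) $$ (k,p) = 1\<^sub>m n $$ (k,p)" using k p unfolding g_def by simp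
  qed (insert X Xpc, auto)
  moreover have "U * Xp = K"
  proof (rule eq_matI)
    fix l p assume "l < dim_row K" "p < dim_col K"
    then have l: "l < mm" and p: "p < n" using K by auto
    have "(U * Xp) $$ (l,p) = (\<Sum>j<r. M (n+l) j * Y p j)"
      using l p U unfolding Xp_def M_def by (simp add: scalar_prod_def atLeast0LessThan)
    also have "\<dots> = g p (n+l)" using Y[OF p] l by simp
    finally show "(U * Xp) $$ (l,p) = K $$ (l,p)" using l p unfolding g_def by simp
  qed (insert U K Xpc, auto)
  ultimately show ?thesis using Xpc by blast
qed



lemma sum_lessThan_mult: "(\<Sum>c<(N::nat)*q. f c) = (\<Sum>j<N. \<Sum>l<q. (f (j*q+l) :: 'a::comm_monoid_add))"
proof (induct N)
  case 0 then show ?case by simp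
next
  case (Suc N)
  have "(\<Sum>c<Suc N*q. f c) = (\<Sum>c<N*q + q. f c)" by (simp add: add.commute)
  also have "\<dots> = (\<Sum>c<N*q. f c) + (\<Sum>l<q. f (N*q+l))" by (rule sum_lessThan_add)
  finally show ?case using Suc by simp
qed

lemma idx_bound: assumes j: "j < N" and l: "l < q" shows "j*q + l < N*(q::nat)"
proof -
  have "j*q + l < j*q + q" using l by simp
  also have "\<dots> = Suc j * q" by simp
  also have "\<dots> \<le> N * q" using j by (intro mult_right_mono, auto)
  finally show ?thesis .
qed

lemma Lo_entry:
  assumes S: "S \<in> carrier_mat q q" and H: "H \<in> carrier_mat N N"
    and r: "r < N*q" and j: "j < N" and l: "l < q"
  shows "Lo_of S H \<mu> $$ (r, j*q+l) = (if r div q = j then S $$ (r mod q, l) else 0)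
     - \<mu> * (H $$ (r div q, j) * (if r mod q = l then 1 else 0))"
proof -
  have q: "q > 0" using l by simp
  have jl: "j*q + l < N*q"
  proof -
    have "j*q + l < j*q + q" using l by simp
    also have "\<dots> = Suc j * q" by simp
    also have "\<dots> \<le> N * q" using j by (intro mult_right_mono, auto)
    finally show ?thesis .
  qed
  have rd: "r div q < N" using r q by (simp add: less_mult_imp_div_less)
  have rm: "r mod q < q" using q by simp
  have d1: "(j*q+l) div q = j" and d2: "(j*q+l) mod q = l" using l q by auto
  show ?thesis unfolding Lo_of_def kron_def using S H r jl rd rm d1 d2 j l by simp
qed

lemma Lo_bound:
  fixes S H :: "real mat" and w :: "nat \<Rightarrow> real"
  assumes S: "S \<in> carrier_mat q q" and H: "H \<in> carrier_mat N N"
    and offd: "\<And>i j. i < N \<Longrightarrow> j < N \<Longrightarrow> i \<noteq> j \<Longrightarrow> H $$ (i,j) \<le> 0"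
    and w: "\<And>i. i < N \<Longrightarrow> 0 < w i \<and> w i \<le> 1"
    and marg: "\<And>i. i < N \<Longrightarrow> c \<le> w i * H $$ (i,i) + (\<Sum>j\<in>{..<N}-{i}. H $$ (i,j) * w j)"
    and c: "0 \<le> c" and mu: "0 \<le> \<mu>"
    and ev: "eigenvalue (map_mat complex_of_real (Lo_of S H \<mu>)) z"
  shows "Re z \<le> (\<Sum>k<q. \<Sum>l<q. \<bar>S $$ (k,l)\<bar>) - \<mu> * c"
proof -
  define \<sigma> where "\<sigma> = (\<Sum>k<q. \<Sum>l<q. \<bar>S $$ (k,l)\<bar>)"
  let ?L = "Lo_of S H \<mu>"
  have Lc: "?L \<in> carrier_mat (N*q) (N*q)" by (rule Lo_carrier[OF S H])
  from ev obtain v where v: "v \<in> carrier_vec (N*q)" "v \<noteq> 0\<^sub>v (N*q)"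
     "map_mat complex_of_real ?L *\<^sub>v v = z \<cdot>\<^sub>v v"
    unfolding eigenvalue_def eigenvector_def using Lc by auto
  obtain r1 where r1: "r1 < N*q" "v $ r1 \<noteq> 0"
  proof -
    have "\<exists>r1 < N*q. v $ r1 \<noteq> 0"
    proof (rule ccontr)
      assume "\<not> ?thesis"
      then have "v = 0\<^sub>v (N*q)" using v(1) by (intro eq_vecI, auto)
      with v(2) show False by simp
    qed
    then show ?thesis using that by blast
  qed
  have q: "q > 0" using r1(1) by (cases q, auto)
  have divN: "r div q < N" if "r < N*q" for r using that q by (simp add: less_mult_imp_div_less)
  define f where "f = (\<lambda>r. cmod (v $ r) / w (r div q))"
  define A where "A = {..<N*q}"
  have Af: "finite A" and Ane: "A \<noteq> {}" using r1 unfolding A_def by auto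
  define R0 where "R0 = Max (f ` A)"
  have "R0 \<in> f ` A" unfolding R0_def using Af Ane by (intro Max_in, auto)
  then obtain r0 where r0: "r0 < N*q" "f r0 = R0" unfolding A_def by auto
  have fle: "f r \<le> R0" if "r < N*q" for r
    unfolding R0_def using Af that unfolding A_def by (intro Max_ge, auto)
  have vb: "cmod (v $ r) \<le> w (r div q) * R0" if r: "r < N*q" for r
  proof -
    have wp: "w (r div q) > 0" using w divN[OF r] by auto
    have "cmod (v $ r) / w (r div q) \<le> R0" using fle[OF r] unfolding f_def .
    then show ?thesis using wp by (simp add: divide_le_eq mult.commute)
  qed
  have R0pos: "R0 > 0"
  proof -
    have "f r1 > 0" unfolding f_def using r1 w divN[OF r1(1)] by auto
    then show ?thesis using fle[OF r1(1)] by simp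
  qed
  define i where "i = r0 div q"
  define k where "k = r0 mod q"
  have i: "i < N" unfolding i_def by (rule divN[OF r0(1)])
  have k: "k < q" unfolding k_def using q by simp
  have r0eq: "r0 = i*q + k" unfolding i_def k_def by simp
  have wi: "0 < w i" "w i \<le> 1" using w[OF i] by auto
  have vr0: "cmod (v $ r0) = w i * R0" using r0(2) wi unfolding f_def i_def[symmetric] by (simp add: field_simps)
  define T1 where "T1 = (\<Sum>l<q. complex_of_real (S $$ (k,l)) * v $ (i*q+l))"
  define T2 where "T2 = (\<Sum>j\<in>{..<N}-{i}. complex_of_real (H $$ (i,j)) * v $ (j*q+k))"
  have iql: "i*q + l < N*q" if "l < q" for l using idx_bound[OF i that] .
  have jqk: "j*q + k < N*q" if "j < N" for j using idx_bound[OF that k] .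
  have "(map_mat complex_of_real ?L *\<^sub>v v) $ r0 = (\<Sum>c<N*q. complex_of_real (?L $$ (r0,c)) * v $ c)"
    using Lc v(1) r0(1) by (simp add: scalar_prod_def atLeast0LessThan)
  also have "\<dots> = (\<Sum>j<N. \<Sum>l<q. complex_of_real (?L $$ (r0, j*q+l)) * v $ (j*q+l))"
    by (rule sum_lessThan_mult)
  also have "\<dots> = (\<Sum>j<N. \<Sum>l<q. (if i = j then complex_of_real (S $$ (k,l)) * v $ (j*q+l) else 0)
      - (if k = l then complex_of_real (\<mu> * H $$ (i,j)) * v $ (j*q+k) else 0))"
  proof (intro sum.cong refl)
    fix j l assume j: "j \<in> {..<N}" and l: "l \<in> {..<q}"
    have le: "?L $$ (r0, j*q+l) = (if i = j then S $$ (k, l) else 0) - \<mu> * (H $$ (i, j) * (if k = l then 1 else 0))"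
      using Lo_entry[OF S H r0(1), of j l \<mu>] j l unfolding i_def k_def by simp
    show "complex_of_real (?L $$ (r0, j*q+l)) * v $ (j*q+l) =
      (if i = j then complex_of_real (S $$ (k,l)) * v $ (j*q+l) else 0)
      - (if k = l then complex_of_real (\<mu> * H $$ (i,j)) * v $ (j*q+k) else 0)"
      unfolding le by (cases "i = j"; cases "k = l"; simp add: algebra_simps)
  qed
  also have "\<dots> = T1 - complex_of_real \<mu> * (\<Sum>j<N. complex_of_real (H $$ (i,j)) * v $ (j*q+k))"
  proof -
    have a: "(\<Sum>j<N. \<Sum>l<q. (if i = j then complex_of_real (S $$ (k,l)) * v $ (j*q+l) else 0)) = T1"
    proof -
      have "(\<Sum>j<N. \<Sum>l<q. (if i = j then complex_of_real (S $$ (k,l)) * v $ (j*q+l) else 0))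
         = (\<Sum>j<N. if i = j then (\<Sum>l<q. complex_of_real (S $$ (k,l)) * v $ (j*q+l)) else 0)"
        by (rule sum.cong, auto)
      also have "\<dots> = T1" unfolding T1_def using i by (simp add: sum.delta sum.delta')
      finally show ?thesis .
    qed
    have b: "(\<Sum>j<N. \<Sum>l<q. (if k = l then complex_of_real (\<mu> * H $$ (i,j)) * v $ (j*q+k) else 0))
       = complex_of_real \<mu> * (\<Sum>j<N. complex_of_real (H $$ (i,j)) * v $ (j*q+k))"
      using k by (simp add: sum_distrib_left algebra_simps)
    show ?thesis unfolding sum_subtractf a b ..
  qed
  also have "(\<Sum>j<N. complex_of_real (H $$ (i,j)) * v $ (j*q+k)) = complex_of_real (H $$ (i,i)) * v $ r0 + T2"
    unfolding T2_def r0eq using i by (subst sum.remove[of _ i], auto)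
  finally have e1: "(map_mat complex_of_real ?L *\<^sub>v v) $ r0 = T1 - complex_of_real \<mu> * (complex_of_real (H $$ (i,i)) * v $ r0 + T2)" .
  have "(map_mat complex_of_real ?L *\<^sub>v v) $ r0 = z * v $ r0" using v(3) v(1) r0(1) by simp
  with e1 have key: "(z + complex_of_real (\<mu> * H $$ (i,i))) * v $ r0 = T1 - complex_of_real \<mu> * T2"
    by (simp add: algebra_simps)
  have sk: "(\<Sum>l<q. \<bar>S $$ (k,l)\<bar>) \<le> \<sigma>" unfolding \<sigma>_def
    by (rule member_le_sum[where i=k and A="{..<q}"], insert k, auto intro: sum_nonneg)
  have bT1: "cmod T1 \<le> \<sigma> * (w i * R0)"
  proof -
    have "cmod T1 \<le> (\<Sum>l<q. cmod (complex_of_real (S $$ (k,l)) * v $ (i*q+l)))" unfolding T1_def by (rule norm_sum)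
    also have "\<dots> \<le> (\<Sum>l<q. \<bar>S $$ (k,l)\<bar> * (w i * R0))"
    proof (rule sum_mono)
      fix l assume l: "l \<in> {..<q}"
      have "(i*q+l) div q = i" using l q by auto
      then have "cmod (v $ (i*q+l)) \<le> w i * R0" using vb[OF iql] l by auto
      then show "cmod (complex_of_real (S $$ (k,l)) * v $ (i*q+l)) \<le> \<bar>S $$ (k,l)\<bar> * (w i * R0)"
        by (simp add: norm_mult mult_left_mono)
    qed
    also have "\<dots> = (\<Sum>l<q. \<bar>S $$ (k,l)\<bar>) * (w i * R0)" by (simp add: sum_distrib_right)
    also have "\<dots> \<le> \<sigma> * (w i * R0)" using sk wi R0pos by (intro mult_right_mono, auto)
    finally show ?thesis .
  qed
  have bT2: "cmod T2 \<le> (\<Sum>j\<in>{..<N}-{i}. - H $$ (i,j) * w j) * R0"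
  proof -
    have "cmod T2 \<le> (\<Sum>j\<in>{..<N}-{i}. cmod (complex_of_real (H $$ (i,j)) * v $ (j*q+k)))" unfolding T2_def by (rule norm_sum)
    also have "\<dots> \<le> (\<Sum>j\<in>{..<N}-{i}. - H $$ (i,j) * (w j * R0))"
    proof (rule sum_mono)
      fix j assume j: "j \<in> {..<N}-{i}"
      have "(j*q+k) div q = j" using k q by auto
      then have "cmod (v $ (j*q+k)) \<le> w j * R0" using vb[OF jqk[of j]] j by auto
      moreover have "\<bar>H $$ (i,j)\<bar> = - H $$ (i,j)" using offd[OF i, of j] j by auto
      ultimately have "\<bar>H $$ (i,j)\<bar> * cmod (v $ (j*q+k)) \<le> - H $$ (i,j) * (w j * R0)"
        by (metis abs_ge_zero mult_left_mono)
      then show "cmod (complex_of_real (H $$ (i,j)) * v $ (j*q+k)) \<le> - H $$ (i,j) * (w j * R0)"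
        by (simp add: norm_mult)
    qed
    also have "\<dots> = (\<Sum>j\<in>{..<N}-{i}. - H $$ (i,j) * w j) * R0" by (simp add: sum_distrib_right sum_distrib_left sum_negf algebra_simps)
    finally show ?thesis .
  qed
  define Z where "Z = z + complex_of_real (\<mu> * H $$ (i,i))"
  have "cmod Z * (w i * R0) = cmod (Z * v $ r0)" using vr0 by (simp add: norm_mult)
  also have "\<dots> = cmod (T1 - complex_of_real \<mu> * T2)" using key unfolding Z_def by simp
  also have "\<dots> \<le> cmod T1 + \<mu> * cmod T2" using mu by (simp add: norm_triangle_ineq4[THEN order_trans] norm_mult)
  also have "\<dots> \<le> \<sigma> * (w i * R0) + \<mu> * ((\<Sum>j\<in>{..<N}-{i}. - H $$ (i,j) * w j) * R0)"
    using bT1 bT2 mu by (intro add_mono mult_left_mono, auto)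
  finally have "cmod Z * w i * R0 \<le> (\<sigma> * w i + \<mu> * (\<Sum>j\<in>{..<N}-{i}. - H $$ (i,j) * w j)) * R0"
    by (simp add: algebra_simps)
  then have b1: "cmod Z * w i \<le> \<sigma> * w i + \<mu> * (\<Sum>j\<in>{..<N}-{i}. - H $$ (i,j) * w j)"
    using R0pos by simp
  have "Re Z \<le> cmod Z" by (rule complex_Re_le_cmod)
  then have "(Re z + \<mu> * H $$ (i,i)) * w i \<le> cmod Z * w i" unfolding Z_def using wi by (intro mult_right_mono, auto)
  with b1 have "Re z * w i \<le> \<sigma> * w i - \<mu> * (w i * H $$ (i,i) + (\<Sum>j\<in>{..<N}-{i}. H $$ (i,j) * w j))"
    by (simp add: algebra_simps sum_negf)
  also have "\<dots> \<le> \<sigma> * w i - \<mu> * c" using marg[OF i] mu by (simp add: mult_left_mono)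
  finally have b2: "Re z * w i \<le> \<sigma> * w i - \<mu> * c" .
  have "\<mu> * c * w i \<le> \<mu> * c" using wi mu c by (simp add: mult_left_le)
  with b2 have "Re z * w i \<le> (\<sigma> - \<mu> * c) * w i" by (simp add: algebra_simps)
  then show ?thesis unfolding \<sigma>_def[symmetric] using wi by simp
qed



definition beta_of :: "nat \<Rightarrow> real \<Rightarrow> real \<Rightarrow> real" where
  "beta_of N e1 e2 = e1 / (2 * (e1 + real N * e2))"

definition cg :: "nat \<Rightarrow> real \<Rightarrow> real \<Rightarrow> real" where
  "cg N e1 e2 = beta_of N e1 e2 ^ ((N+1)^2) * e1 / 2"

lemma lap_off: "p \<le> N \<Longrightarrow> k \<le> N \<Longrightarrow> p \<noteq> k \<Longrightarrow> laplacian N a $$ (p,k) = - a p k"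
  unfolding laplacian_def by simp

lemma lap_diag: "p \<le> N \<Longrightarrow> laplacian N a $$ (p,p) = (\<Sum>k\<in>{0..N} - {p}. a p k)"
  unfolding laplacian_def by simp

lemma graph_weights:
  assumes adm: "admissible_graph N a \<epsilon>1 \<epsilon>2" and e1: "0 < \<epsilon>1" and e12: "\<epsilon>1 \<le> \<epsilon>2"
  shows "\<exists>d. d 0 = 0 \<and> (\<forall>p\<in>{1..N}. 0 < d p \<and> d p \<le> 1 \<and>
            cg N \<epsilon>1 \<epsilon>2 \<le> (\<Sum>k\<in>{0..N}-{p}. a p k * (d p - d k)))"
proof -
  define R where "R = {(j,k). j \<le> N \<and> k \<le> N \<and> 0 < a k j}"
  have Rsub: "R \<subseteq> {..N} \<times> {..N}" unfolding R_def by auto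
  have Rf: "finite R" using Rsub finite_subset by blast
  have cardR: "card R \<le> (N+1)^2"
  proof -
    have "card R \<le> card ({..N} \<times> {..N})" using Rsub by (intro card_mono, auto)
    also have "\<dots> = (N+1)^2" by (simp add: card_cartesian_product power2_eq_square)
    finally show ?thesis .
  qed
  have nonneg: "\<And>i j. i \<le> N \<Longrightarrow> j \<le> N \<Longrightarrow> 0 \<le> a i j" using adm unfolding admissible_graph_def by auto
  have diag0: "\<And>i. i \<le> N \<Longrightarrow> a i i = 0" using adm unfolding admissible_graph_def by auto
  have reach: "\<And>p. p \<in> {1..N} \<Longrightarrow> (0,p) \<in> R\<^sup>*" using adm unfolding admissible_graph_def R_def by auto
  have bnds: "\<And>p k. p \<le> N \<Longrightarrow> k \<le> N \<Longrightarrow> p \<noteq> k \<Longrightarrow> a p k \<noteq> 0 \<Longrightarrow> \<epsilon>1 \<le> a p k \<and> a p k \<le> \<epsilon>2"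
  proof -
    fix p k assume pk: "p \<le> N" "k \<le> N" "p \<noteq> k" "a p k \<noteq> 0"
    have "laplacian N a $$ (p,k) \<noteq> 0" using lap_off[OF pk(1-3)] pk(4) by simp
    then have "\<epsilon>1 \<le> \<bar>laplacian N a $$ (p,k)\<bar> \<and> \<bar>laplacian N a $$ (p,k)\<bar> \<le> \<epsilon>2"
      using adm pk unfolding admissible_graph_def by blast
    then show "\<epsilon>1 \<le> a p k \<and> a p k \<le> \<epsilon>2" using lap_off[OF pk(1-3)] nonneg[OF pk(1,2)] by simp
  qed
  have ale2: "\<And>p k. p \<le> N \<Longrightarrow> k \<le> N \<Longrightarrow> p \<noteq> k \<Longrightarrow> a p k \<le> \<epsilon>2"
    using bnds e1 e12 by fastforce
  define dep where "dep = (\<lambda>p. LEAST t. (0,p) \<in> R ^^ t)"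
  define \<beta> where "\<beta> = beta_of N \<epsilon>1 \<epsilon>2"
  have e2: "0 < \<epsilon>2" using e1 e12 by simp
  have den: "0 < \<epsilon>1 + real N * \<epsilon>2" using e1 e2 by (simp add: add_pos_nonneg)
  have b0: "0 < \<beta>" unfolding \<beta>_def beta_of_def using e1 den by simp
  have b1: "\<beta> < 1"
  proof -
    have "\<epsilon>1 < 2 * (\<epsilon>1 + real N * \<epsilon>2)" using e1 e2 by (simp add: add_pos_nonneg)
    then show ?thesis unfolding \<beta>_def beta_of_def using den by simp
  qed
  have bkey: "\<beta> * (\<epsilon>1 + real N * \<epsilon>2) = \<epsilon>1 / 2" unfolding \<beta>_def beta_of_def using den by (simp add: field_simps)
  define d where "d = (\<lambda>p. 1 - \<beta> ^ dep p)"
  have dep0: "dep 0 = 0" unfolding dep_def by (rule Least_eq_0, simp)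
  have "\<forall>p\<in>{1..N}. 0 < d p \<and> d p \<le> 1 \<and> cg N \<epsilon>1 \<epsilon>2 \<le> (\<Sum>k\<in>{0..N}-{p}. a p k * (d p - d k))"
  proof
    fix p assume p: "p \<in> {1..N}"
    have "(0,p) \<in> (\<Union>n\<in>{n. n \<le> card R}. R ^^ n)" using reach[OF p] rtrancl_finite_eq_relpow[OF Rf] by simp
    then obtain t where t: "t \<le> card R" "(0,p) \<in> R ^^ t" by auto
    have dpt: "dep p \<le> t" unfolding dep_def by (rule Least_le, rule t(2))
    have inR: "(0,p) \<in> R ^^ dep p" unfolding dep_def by (rule LeastI, rule t(2))
    have "dep p \<noteq> 0"
    proof
      assume "dep p = 0"
      with inR have "(0,p) \<in> R ^^ 0" by simp
      with p show False by simp
    qed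
    then obtain t' where t': "dep p = Suc t'" by (cases "dep p", auto)
    from inR t' have "(0,p) \<in> R ^^ t' O R" by simp
    then obtain k0 where k0: "(0,k0) \<in> R ^^ t'" "(k0,p) \<in> R" by auto
    have k0N: "k0 \<le> N" and apk0: "0 < a p k0" using k0(2) unfolding R_def by auto
    have pN: "p \<le> N" using p by auto
    have k0p: "k0 \<noteq> p" using apk0 diag0[OF pN] by auto
    have depk0: "dep k0 \<le> t'" unfolding dep_def by (rule Least_le, rule k0(1))
    have a_k0: "\<epsilon>1 \<le> a p k0" using bnds[OF pN k0N k0p[symmetric]] apk0 by auto
    have tbound: "t' \<le> (N+1)^2" using dpt t(1) cardR t' by simp
    define Kset where "Kset = {0..N} - {p}"
    have k0K: "k0 \<in> Kset" unfolding Kset_def using k0N k0p by auto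
    have fK: "finite Kset" unfolding Kset_def by simp
    have dd: "d p - d k = \<beta> ^ dep k - \<beta> ^ Suc t'" for k unfolding d_def t' by simp
    have term1: "\<epsilon>1 * (\<beta> ^ t' - \<beta> ^ Suc t') \<le> a p k0 * (d p - d k0)"
    proof -
      have "\<beta> ^ t' \<le> \<beta> ^ dep k0" using depk0 b0 b1 by (intro power_decreasing, auto)
      then have "\<beta> ^ t' - \<beta> ^ Suc t' \<le> \<beta> ^ dep k0 - \<beta> ^ Suc t'" by simp
      moreover have "0 \<le> \<beta> ^ t' - \<beta> ^ Suc t'"
      proof -
        have "\<beta> ^ Suc t' \<le> \<beta> ^ t'" using b0 b1 by (intro power_decreasing, auto)
        then show ?thesis by linarith
      qed
      ultimately show ?thesis unfolding dd using a_k0 e1 by (intro mult_mono, auto)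
    qed
    have rest: "- (real N * \<epsilon>2 * \<beta> ^ Suc t') \<le> (\<Sum>k\<in>Kset - {k0}. a p k * (d p - d k))"
    proof -
      have each: "- (\<epsilon>2 * \<beta> ^ Suc t') \<le> a p k * (d p - d k)" if k: "k \<in> Kset - {k0}" for k
      proof -
        have kN: "k \<le> N" and kp: "k \<noteq> p" using k unfolding Kset_def by auto
        have a0: "0 \<le> a p k" and a2: "a p k \<le> \<epsilon>2" using nonneg[OF pN kN] ale2[OF pN kN kp[symmetric]] by auto
        have "- (\<epsilon>2 * \<beta> ^ Suc t') \<le> - (a p k * \<beta> ^ Suc t')" using a2 b0 by (simp add: mult_right_mono)
        also have "\<dots> \<le> a p k * (\<beta> ^ dep k - \<beta> ^ Suc t')" using a0 b0
          by (simp add: algebra_simps)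
        finally show ?thesis unfolding dd .
      qed
      have "real (card (Kset - {k0})) * (- (\<epsilon>2 * \<beta> ^ Suc t')) \<le> (\<Sum>k\<in>Kset - {k0}. a p k * (d p - d k))"
        by (rule sum_bounded_below, rule each)
      moreover have "card (Kset - {k0}) \<le> N"
      proof -
        have "card (Kset - {k0}) \<le> card Kset" using fK by (intro card_mono, auto)
        also have "card Kset = N" unfolding Kset_def using pN by simp
        finally show ?thesis .
      qed
      moreover have x0: "0 \<le> \<epsilon>2 * \<beta> ^ Suc t'" using e2 b0 by simp
      ultimately have "real (card (Kset - {k0})) * (\<epsilon>2 * \<beta> ^ Suc t') \<le> real N * (\<epsilon>2 * \<beta> ^ Suc t')"
        by (intro mult_right_mono, auto)
      moreover have "real (card (Kset - {k0})) * (- (\<epsilon>2 * \<beta> ^ Suc t')) \<le> (\<Sum>k\<in>Kset - {k0}. a p k * (d p - d k))"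
        by (rule sum_bounded_below, rule each)
      ultimately show ?thesis by (simp add: algebra_simps)
    qed
    have "(\<Sum>k\<in>Kset. a p k * (d p - d k)) = a p k0 * (d p - d k0) + (\<Sum>k\<in>Kset - {k0}. a p k * (d p - d k))"
      by (rule sum.remove[OF fK k0K])
    also have "\<dots> \<ge> \<epsilon>1 * (\<beta> ^ t' - \<beta> ^ Suc t') - real N * \<epsilon>2 * \<beta> ^ Suc t'"
      using term1 rest by linarith
    finally have m1: "\<epsilon>1 * (\<beta> ^ t' - \<beta> ^ Suc t') - real N * \<epsilon>2 * \<beta> ^ Suc t' \<le> (\<Sum>k\<in>Kset. a p k * (d p - d k))" .
    have "\<epsilon>1 * (\<beta> ^ t' - \<beta> ^ Suc t') - real N * \<epsilon>2 * \<beta> ^ Suc t' = \<beta> ^ t' * (\<epsilon>1 - \<beta> * (\<epsilon>1 + real N * \<epsilon>2))"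
      by (simp add: algebra_simps)
    also have "\<dots> = \<beta> ^ t' * \<epsilon>1 / 2" unfolding bkey by simp
    also have "\<dots> \<ge> \<beta> ^ ((N+1)^2) * \<epsilon>1 / 2"
    proof -
      have "\<beta> ^ ((N+1)^2) \<le> \<beta> ^ t'" using tbound b0 b1 by (intro power_decreasing, auto)
      then show ?thesis using e1 by (simp add: divide_right_mono mult_right_mono)
    qed
    finally have "cg N \<epsilon>1 \<epsilon>2 \<le> (\<Sum>k\<in>Kset. a p k * (d p - d k))" using m1 unfolding cg_def \<beta>_def by linarith
    moreover have "0 < d p"
    proof -
      have "\<beta> ^ Suc t' \<le> \<beta> ^ 1" using b0 b1 by (intro power_decreasing, auto)
      then show ?thesis unfolding d_def t' using b1 by simp
    qed
    moreover have "d p \<le> 1" unfolding d_def using b0 by simp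
    ultimately show "0 < d p \<and> d p \<le> 1 \<and> cg N \<epsilon>1 \<epsilon>2 \<le> (\<Sum>k\<in>{0..N}-{p}. a p k * (d p - d k))"
      unfolding Kset_def by auto
  qed
  moreover have "d 0 = 0" unfolding d_def dep0 by simp
  ultimately show ?thesis by blast
qed



lemma H_of_carrier: "H_of N a \<in> carrier_mat N N" unfolding H_of_def by simp

lemma H_of_entry: "i < N \<Longrightarrow> j < N \<Longrightarrow> H_of N a $$ (i,j) = laplacian N a $$ (Suc i, Suc j)"
  unfolding H_of_def by simp

lemma H_margin:
  assumes adm: "admissible_graph N a \<epsilon>1 \<epsilon>2" and e1: "0 < \<epsilon>1" and e12: "\<epsilon>1 \<le> \<epsilon>2"
  shows "\<exists>w. \<forall>i<N. 0 < w i \<and> w i \<le> 1 \<and>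
     cg N \<epsilon>1 \<epsilon>2 \<le> w i * H_of N a $$ (i,i) + (\<Sum>j\<in>{..<N}-{i}. H_of N a $$ (i,j) * w j)"
proof -
  obtain d where d0: "d 0 = 0" and dp: "\<And>p. p\<in>{1..N} \<Longrightarrow> 0 < d p \<and> d p \<le> 1 \<and>
       cg N \<epsilon>1 \<epsilon>2 \<le> (\<Sum>k\<in>{0..N}-{p}. a p k * (d p - d k))"
    using graph_weights[OF adm e1 e12] by blast
  define w where "w = (\<lambda>i. d (Suc i))"
  have "\<forall>i<N. 0 < w i \<and> w i \<le> 1 \<and>
     cg N \<epsilon>1 \<epsilon>2 \<le> w i * H_of N a $$ (i,i) + (\<Sum>j\<in>{..<N}-{i}. H_of N a $$ (i,j) * w j)"
  proof (intro allI impI)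
    fix i assume i: "i < N"
    define p where "p = Suc i"
    have p: "p \<in> {1..N}" "p \<le> N" unfolding p_def using i by auto
    have Hii: "H_of N a $$ (i,i) = (\<Sum>k\<in>{0..N}-{p}. a p k)"
      unfolding H_of_entry[OF i i] p_def[symmetric] using lap_diag[OF p(2)] by simp
    have Hij: "H_of N a $$ (i,j) = - a p (Suc j)" if "j \<in> {..<N}-{i}" for j
      using that H_of_entry[OF i, of j] lap_off[OF p(2), of "Suc j"] unfolding p_def by auto
    have setq: "{0..N}-{p} = insert 0 (Suc ` ({..<N}-{i}))"
    proof -
      have "k \<in> insert 0 (Suc ` ({..<N}-{i}))" if "k \<in> {0..N}-{p}" for k
        using that unfolding p_def by (cases k, auto)
      moreover have "k \<in> {0..N}-{p}" if "k \<in> insert 0 (Suc ` ({..<N}-{i}))" for k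
        using that unfolding p_def by auto
      ultimately show ?thesis by blast
    qed
    have "(\<Sum>k\<in>{0..N}-{p}. a p k * d k) = a p 0 * d 0 + (\<Sum>k\<in>Suc ` ({..<N}-{i}). a p k * d k)"
      unfolding setq by (subst sum.insert, auto)
    also have "\<dots> = (\<Sum>j\<in>{..<N}-{i}. a p (Suc j) * w j)"
      unfolding d0 w_def by (subst sum.reindex, auto)
    finally have s2: "(\<Sum>k\<in>{0..N}-{p}. a p k * d k) = (\<Sum>j\<in>{..<N}-{i}. a p (Suc j) * w j)" .
    have "(\<Sum>k\<in>{0..N}-{p}. a p k * (d p - d k)) = d p * (\<Sum>k\<in>{0..N}-{p}. a p k) - (\<Sum>k\<in>{0..N}-{p}. a p k * d k)"
      by (simp add: algebra_simps sum_subtractf sum_distrib_left)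
    also have "\<dots> = w i * H_of N a $$ (i,i) + (\<Sum>j\<in>{..<N}-{i}. H_of N a $$ (i,j) * w j)"
      unfolding s2 Hii w_def p_def[symmetric] using Hij by (simp add: sum_negf)
    finally show "0 < w i \<and> w i \<le> 1 \<and>
     cg N \<epsilon>1 \<epsilon>2 \<le> w i * H_of N a $$ (i,i) + (\<Sum>j\<in>{..<N}-{i}. H_of N a $$ (i,j) * w j)"
      using dp[OF p(1)] unfolding w_def p_def by auto
  qed
  then show ?thesis by blast
qed

lemma H_offd:
  assumes adm: "admissible_graph N a \<epsilon>1 \<epsilon>2" and i: "i < N" and j: "j < N" and ij: "i \<noteq> j"
  shows "H_of N a $$ (i,j) \<le> 0"
  using H_of_entry[OF i j] lap_off[of "Suc i" N "Suc j" a] i j ij adm unfolding admissible_graph_def by auto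

lemma cg_pos: "0 < e1 \<Longrightarrow> e1 \<le> e2 \<Longrightarrow> 0 < cg N e1 e2"
  unfolding cg_def beta_of_def by (simp add: add_pos_nonneg)

lemma XDEV:
  fixes X U A B E V D Xp :: "real mat"
  assumes X: "X \<in> carrier_mat n r" and U: "U \<in> carrier_mat mm r" and A: "A \<in> carrier_mat n n"
    and B: "B \<in> carrier_mat n mm" and E: "E \<in> carrier_mat n q" and V: "V \<in> carrier_mat q r"
    and D: "D \<in> carrier_mat r r" and Xp: "Xp \<in> carrier_mat r n"
    and eq: "X * D = A * X + B * U + E * V" and XXp: "X * Xp = 1\<^sub>m n"
  shows "(X * D - E * V) * Xp = A + B * (U * Xp)"
proof -
  have "X * D - E * V = A * X + B * U"
  proof (rule eq_matI)
    fix i j assume "i < dim_row (A * X + B * U)" "j < dim_col (A * X + B * U)"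
    then have i: "i < n" and j: "j < r" using A X B U by auto
    have "(X * D) $$ (i,j) = (A * X) $$ (i,j) + (B * U) $$ (i,j) + (E * V) $$ (i,j)"
      unfolding eq using i j A X B U E V by simp
    then show "(X * D - E * V) $$ (i,j) = (A * X + B * U) $$ (i,j)" using i j A X B U E V D by simp
  qed (insert A X B U E V D, auto)
  then have "(X * D - E * V) * Xp = (A * X + B * U) * Xp" by simp
  also have "\<dots> = A * X * Xp + B * U * Xp" by (rule add_mult_distrib_mat, insert A X B U Xp, auto)
  also have "A * X * Xp = A * (X * Xp)" using A X Xp by (simp add: assoc_mult_mat)
  also have "\<dots> = A" unfolding XXp using A by simp
  also have "B * U * Xp = B * (U * Xp)" using B U Xp by (simp add: assoc_mult_mat)
  finally show ?thesis .
qed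



theorem theorem1:
  fixes N q d :: nat and n m :: "nat \<Rightarrow> nat"
    and E X U :: "nat \<Rightarrow> real mat" and V D S :: "real mat" and \<epsilon>1 \<epsilon>2 :: real
  assumes dims: "\<forall>i\<in>{1..N}. E i \<in> carrier_mat (n i) q \<and> X i \<in> carrier_mat (n i) (Suc d)
                   \<and> U i \<in> carrier_mat (m i) (Suc d)"
    and V: "V \<in> carrier_mat q (Suc d)"
    and D: "D \<in> carrier_mat (Suc d) (Suc d)"
    and S: "S \<in> carrier_mat q q"
    and S_eig: "\<forall>z. eigenvalue (map_mat complex_of_real S) z \<longrightarrow> 0 \<le> Re z"
    and exact: "\<exists>Ai Bi. consistent N n m E X U V D Ai Bi"
    and eps: "0 < \<epsilon>1" "\<epsilon>1 \<le> \<epsilon>2"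
  shows "\<exists>\<mu>0. \<forall>a \<mu>. admissible_graph N a \<epsilon>1 \<epsilon>2 \<and> \<mu>0 \<le> \<mu> \<longrightarrow>
           (informative N n m q E X U V D S (H_of N a) \<mu> \<longleftrightarrow>
            (\<forall>i\<in>{1..N}. \<exists>Xp \<in> carrier_mat (Suc d) (n i).
               X i * Xp = 1\<^sub>m (n i) \<and> hurwitz ((X i * D - E i * V) * Xp)))"
proof -
  define \<sigma> where "\<sigma> = (\<Sum>k<q. \<Sum>l<q. \<bar>S $$ (k,l)\<bar>)"
  define c where "c = cg N \<epsilon>1 \<epsilon>2"
  have cpos: "0 < c" unfolding c_def by (rule cg_pos[OF eps])
  define \<mu>0 where "\<mu>0 = (\<sigma> + 1) / c"
  have \<sigma>0: "0 \<le> \<sigma>" unfolding \<sigma>_def by (intro sum_nonneg, auto)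
  have mu0pos: "0 < \<mu>0" unfolding \<mu>0_def using \<sigma>0 cpos by simp
  show ?thesis
  proof (rule exI[of _ \<mu>0], intro allI impI)
    fix a \<mu> assume h: "admissible_graph N a \<epsilon>1 \<epsilon>2 \<and> \<mu>0 \<le> \<mu>"
    then have adm: "admissible_graph N a \<epsilon>1 \<epsilon>2" and hmu: "\<mu>0 \<le> \<mu>" by auto
    have mu0: "0 \<le> \<mu>" using hmu mu0pos by simp
    let ?H = "H_of N a"
    have Hc: "?H \<in> carrier_mat N N" by (rule H_of_carrier)
    obtain w where w: "\<forall>i<N. 0 < w i \<and> w i \<le> 1 \<and>
        c \<le> w i * ?H $$ (i,i) + (\<Sum>j\<in>{..<N}-{i}. ?H $$ (i,j) * w j)"
      using H_margin[OF adm eps] unfolding c_def by blast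
    have LoH: "Re z < 0" if ev: "eigenvalue (map_mat complex_of_real (Lo_of S ?H \<mu>)) z" for z
    proof -
      have "Re z \<le> \<sigma> - \<mu> * c" unfolding \<sigma>_def
        by (rule Lo_bound[where w=w and c=c, OF S Hc _ _ _ _ mu0 ev], insert H_offd[OF adm] w cpos, auto)
      moreover have "\<sigma> + 1 \<le> \<mu> * c" using hmu cpos unfolding \<mu>0_def by (simp add: pos_divide_le_eq)
      ultimately show ?thesis by linarith
    qed
    show "informative N n m q E X U V D S ?H \<mu> \<longleftrightarrow>
            (\<forall>i\<in>{1..N}. \<exists>Xp \<in> carrier_mat (Suc d) (n i).
               X i * Xp = 1\<^sub>m (n i) \<and> hurwitz ((X i * D - E i * V) * Xp))"
    proof
      assume "informative N n m q E X U V D S ?H \<mu>"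
      then obtain K1 K2 where K: "\<forall>i\<in>{1..N}. K1 i \<in> carrier_mat (m i) (n i) \<and> K2 i \<in> carrier_mat (m i) q"
        and stab: "\<And>Ai Bi. consistent N n m E X U V D Ai Bi \<Longrightarrow>
            hurwitz (closed_loop (bdiag Ai N) (bdiag Bi N) (bdiag K1 N) (bdiag K2 N) S ?H \<mu>)"
        unfolding informative_def by blast
      obtain Ai0 Bi0 where cons0: "consistent N n m E X U V D Ai0 Bi0" using exact by blast
      show "\<forall>i\<in>{1..N}. \<exists>Xp \<in> carrier_mat (Suc d) (n i).
               X i * Xp = 1\<^sub>m (n i) \<and> hurwitz ((X i * D - E i * V) * Xp)"
      proof
        fix i assume i: "i \<in> {1..N}"
        have Ei: "E i \<in> carrier_mat (n i) q" and Xi: "X i \<in> carrier_mat (n i) (Suc d)"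
          and Ui: "U i \<in> carrier_mat (m i) (Suc d)" using dims i by auto
        have K1i: "K1 i \<in> carrier_mat (m i) (n i)" using K i by auto
        have A0: "Ai0 i \<in> carrier_mat (n i) (n i)" and B0: "Bi0 i \<in> carrier_mat (n i) (m i)"
          and eq0: "X i * D = Ai0 i * X i + Bi0 i * U i + E i * V"
          using cons0 i unfolding consistent_def by auto
        have P: "hurwitz (A + B * K1 i)" if A: "A \<in> carrier_mat (n i) (n i)" and B: "B \<in> carrier_mat (n i) (m i)"
          and AB: "A * X i + B * U i = Ai0 i * X i + Bi0 i * U i" for A B
        proof -
          define Ai' where "Ai' = Ai0(i := A)"
          define Bi' where "Bi' = Bi0(i := B)"
          have cons': "consistent N n m E X U V D Ai' Bi'"
            unfolding consistent_def
          proof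
            fix j assume j: "j \<in> {1..N}"
            show "Ai' j \<in> carrier_mat (n j) (n j) \<and> Bi' j \<in> carrier_mat (n j) (m j) \<and>
                  X j * D = Ai' j * X j + Bi' j * U j + E j * V"
            proof (cases "j = i")
              case True
              then show ?thesis unfolding Ai'_def Bi'_def using A B eq0 AB by simp
            next
              case False
              then show ?thesis unfolding Ai'_def Bi'_def using cons0 j unfolding consistent_def by simp
            qed
          qed
          have hcl: "hurwitz (closed_loop (bdiag Ai' N) (bdiag Bi' N) (bdiag K1 N) (bdiag K2 N) S ?H \<mu>)"
            by (rule stab[OF cons'])
          have cc: "\<forall>j\<in>{1..N}. Ai' j \<in> carrier_mat (n j) (n j) \<and> Bi' j \<in> carrier_mat (n j) (m j)
              \<and> K1 j \<in> carrier_mat (m j) (n j) \<and> K2 j \<in> carrier_mat (m j) q"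
            using cons' K unfolding consistent_def by auto
          note CE = closed_loop_eig[OF cc S Hc]
          have "Re z < 0" if ev: "eigenvalue (map_mat complex_of_real (A + B * K1 i)) z" for z
          proof -
            have "\<exists>j\<in>{1..N}. eigenvalue (map_mat complex_of_real (Ai' j + Bi' j * K1 j)) z"
              using i ev unfolding Ai'_def Bi'_def by (intro bexI[of _ i], auto)
            then have "eigenvalue (map_mat complex_of_real (closed_loop (bdiag Ai' N) (bdiag Bi' N) (bdiag K1 N) (bdiag K2 N) S ?H \<mu>)) z"
              using CE by blast
            then show ?thesis using hcl unfolding hurwitz_def by blast
          qed
          moreover have "dim_row (A + B * K1 i) = dim_col (A + B * K1 i)" using A B K1i by simp
          ultimately show ?thesis unfolding hurwitz_def by blast
        qed
        obtain Xp where Xp: "Xp \<in> carrier_mat (Suc d) (n i)" "X i * Xp = 1\<^sub>m (n i)" "U i * Xp = K1 i"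
          using agent_forward[OF Xi Ui K1i A0 B0 P] by blast
        have "(X i * D - E i * V) * Xp = Ai0 i + Bi0 i * (U i * Xp)"
          by (rule XDEV[OF Xi Ui A0 B0 Ei V D Xp(1) eq0 Xp(2)])
        then have "hurwitz ((X i * D - E i * V) * Xp)" using P[OF A0 B0 refl] Xp(3) by simp
        then show "\<exists>Xp \<in> carrier_mat (Suc d) (n i). X i * Xp = 1\<^sub>m (n i) \<and> hurwitz ((X i * D - E i * V) * Xp)"
          using Xp by blast
      qed
    next
      assume R: "\<forall>i\<in>{1..N}. \<exists>Xp \<in> carrier_mat (Suc d) (n i).
               X i * Xp = 1\<^sub>m (n i) \<and> hurwitz ((X i * D - E i * V) * Xp)"
      then obtain XP where XP: "\<And>i. i \<in> {1..N} \<Longrightarrow> XP i \<in> carrier_mat (Suc d) (n i) \<and> X i * XP i = 1\<^sub>m (n i)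
          \<and> hurwitz ((X i * D - E i * V) * XP i)" by metis
      define K1 where "K1 = (\<lambda>i. U i * XP i)"
      define K2 where "K2 = (\<lambda>i. 0\<^sub>m (m i) q :: real mat)"
      have K: "\<forall>i\<in>{1..N}. K1 i \<in> carrier_mat (m i) (n i) \<and> K2 i \<in> carrier_mat (m i) q"
        unfolding K1_def K2_def using dims XP by fastforce
      have "hurwitz (closed_loop (bdiag Ai N) (bdiag Bi N) (bdiag K1 N) (bdiag K2 N) S ?H \<mu>)"
        if cons: "consistent N n m E X U V D Ai Bi" for Ai Bi
      proof -
        have cc: "\<forall>j\<in>{1..N}. Ai j \<in> carrier_mat (n j) (n j) \<and> Bi j \<in> carrier_mat (n j) (m j)
              \<and> K1 j \<in> carrier_mat (m j) (n j) \<and> K2 j \<in> carrier_mat (m j) q"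
          using cons K unfolding consistent_def by auto
        note CE = closed_loop_eig[OF cc S Hc]
        have "Re z < 0" if ev: "eigenvalue (map_mat complex_of_real (closed_loop (bdiag Ai N) (bdiag Bi N) (bdiag K1 N) (bdiag K2 N) S ?H \<mu>)) z" for z
        proof -
          from ev CE have "(\<exists>j\<in>{1..N}. eigenvalue (map_mat complex_of_real (Ai j + Bi j * K1 j)) z)
              \<or> eigenvalue (map_mat complex_of_real (Lo_of S ?H \<mu>)) z" by blast
          then show ?thesis
          proof
            assume "\<exists>j\<in>{1..N}. eigenvalue (map_mat complex_of_real (Ai j + Bi j * K1 j)) z"
            then obtain j where j: "j \<in> {1..N}" and ej: "eigenvalue (map_mat complex_of_real (Ai j + Bi j * K1 j)) z" by blast
            have Ej: "E j \<in> carrier_mat (n j) q" and Xj: "X j \<in> carrier_mat (n j) (Suc d)"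
              and Uj: "U j \<in> carrier_mat (m j) (Suc d)" using dims j by auto
            have Aj: "Ai j \<in> carrier_mat (n j) (n j)" and Bj: "Bi j \<in> carrier_mat (n j) (m j)"
              and eqj: "X j * D = Ai j * X j + Bi j * U j + E j * V"
              using cons j unfolding consistent_def by auto
            have "(X j * D - E j * V) * XP j = Ai j + Bi j * (U j * XP j)"
              by (rule XDEV[OF Xj Uj Aj Bj Ej V D _ eqj], insert XP[OF j], auto)
            then have "hurwitz (Ai j + Bi j * K1 j)" using XP[OF j] unfolding K1_def by simp
            then show ?thesis using ej unfolding hurwitz_def by blast
          next
            assume "eigenvalue (map_mat complex_of_real (Lo_of S ?H \<mu>)) z"
            then show ?thesis by (rule LoH)
          qed
        qed
        moreover have "dim_row (closed_loop (bdiag Ai N) (bdiag Bi N) (bdiag K1 N) (bdiag K2 N) S ?H \<mu>) =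
          dim_col (closed_loop (bdiag Ai N) (bdiag Bi N) (bdiag K1 N) (bdiag K2 N) S ?H \<mu>)"
          using CE by blast
        ultimately show ?thesis unfolding hurwitz_def by blast
      qed
      then show "informative N n m q E X U V D S ?H \<mu>" unfolding informative_def using K by blast
    qed
  qed
qed

end
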